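(* Let $p\in(0,1)$ and $c\in(0,1)$, and set $\lambda_i=c^{i-1}$ for $i\ge1$. Let $r_1,r_2,\dots$ be $\{0,1\}$-valued random variables with $\Pr(r_1=1)=p$ and, for every $n\ge2$, $\Pr(r_n=1\mid r_1,\dots,r_{n-1})=\lambda_n p+(1-\lambda_n)\bar p_{n-1}$, where $\bar p_m=\frac1m\sum_{i=1}^m r_i$. Then \[\lim_{n\to\infty}\mathbb{E}\big[|\bar p_n-p|\big]\ge 2p(1-p)\exp\big(-c\,\phi(c,1,2)-c^2\,\phi(c^2,2,2)\big),\] where $\phi(z,s,a)=\sum_{k=0}^\infty\frac{z^k}{(a+k)^s}$ is the Lerch transcendent.
   Context: For $|z|<1$ the series defining $\phi(z,s,a)$ converges. *)

theory Defs
  imports "HOL-Probability.Probability"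
begin

definition lerch :: "real \<Rightarrow> real \<Rightarrow> real \<Rightarrow> real" where
  "lerch z s a = (\<Sum>k. z ^ k / (a + real k) powr s)"

definition pbar :: "(nat \<Rightarrow> 'a \<Rightarrow> real) \<Rightarrow> nat \<Rightarrow> 'a \<Rightarrow> real" where
  "pbar r m \<omega> = (\<Sum>i=1..m. r i \<omega>) / real m"

end

theory Submission
  imports Defs
begin

lemma exp_bound_aux:
  fixes x :: real assumes "0 \<le> x" "x \<le> 1/2"
  shows "exp (- x - x\<^sup>2) \<le> 1 - x"
proof -
  define h where "h t = ln (1 - t) + t + t\<^sup>2" for t :: real
  have "h 0 \<le> h x"
  proof (rule DERIV_nonneg_imp_increasing_open[OF assms(1)])
    fix t :: real assume t: "0 < t" "t < x"
    have "(h has_real_derivative (-1/(1-t) + 1 + 2*t)) (at t)"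
      unfolding h_def using t assms
      by (auto intro!: derivative_eq_intros simp: power2_eq_square field_simps)
    moreover have "-1/(1-t) + 1 + 2*t = t*(1-2*t)/(1-t)"
      using t assms by (simp add: field_simps)
    moreover have "t*(1-2*t)/(1-t) \<ge> 0" using t assms by simp
    ultimately show "\<exists>y. (h has_real_derivative y) (at t) \<and> 0 \<le> y" by auto
  next
    show "continuous_on {0..x} h" unfolding h_def using assms
      by (intro continuous_intros) auto
  qed
  hence "- x - x\<^sup>2 \<le> ln (1 - x)" by (simp add: h_def)
  hence "exp (- x - x\<^sup>2) \<le> exp (ln (1 - x))" by simp
  thus ?thesis using assms by simp
qed

lemma series_aux:
  fixes c :: real assumes "0 < c" "c < 1"
  defines "y \<equiv> \<lambda>k::nat. c ^ Suc k / real (Suc (Suc k))"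
  shows "summable (\<lambda>k. y k + (y k)\<^sup>2)"
    and "(\<Sum>k. y k + (y k)\<^sup>2) = c * lerch c 1 2 + c\<^sup>2 * lerch (c\<^sup>2) 2 2"
proof -
  have s1: "summable (\<lambda>k. c ^ k / (2 + real k))"
    by (rule summable_comparison_test[OF _ summable_geometric[of c]])
       (use assms in \<open>auto intro!: exI[of _ 0] simp: divide_le_eq\<close>)
  have c2: "0 < c\<^sup>2" "c\<^sup>2 < 1" using assms by (auto simp: power_less_one_iff)
  have s2: "summable (\<lambda>k. (c\<^sup>2) ^ k / (2 + real k)^2)"
    by (rule summable_comparison_test[OF _ summable_geometric[of "c\<^sup>2"]])
       (use c2 in \<open>auto intro!: exI[of _ 0] simp: divide_le_eq\<close>)
  have l1: "lerch c 1 2 = (\<Sum>k. c ^ k / (2 + real k))"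
    unfolding lerch_def by (intro suminf_cong) (simp add: powr_one)
  have l2: "lerch (c\<^sup>2) 2 2 = (\<Sum>k. (c\<^sup>2) ^ k / (2 + real k)^2)"
    unfolding lerch_def by (intro suminf_cong) simp
  have ey: "y k + (y k)\<^sup>2 = c * (c ^ k / (2 + real k)) + c\<^sup>2 * ((c\<^sup>2) ^ k / (2 + real k)^2)" for k
    unfolding y_def by (simp add: power2_eq_square power_mult_distrib field_simps power_mult[symmetric] mult.commute)
  have sA: "summable (\<lambda>k. c * (c ^ k / (2 + real k)))" using s1 by (rule summable_mult)
  have sB: "summable (\<lambda>k. c\<^sup>2 * ((c\<^sup>2) ^ k / (2 + real k)^2))" using s2 by (rule summable_mult)
  show "summable (\<lambda>k. y k + (y k)\<^sup>2)" unfolding ey using sA sB by (rule summable_add)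
  show "(\<Sum>k. y k + (y k)\<^sup>2) = c * lerch c 1 2 + c\<^sup>2 * lerch (c\<^sup>2) 2 2"
    unfolding ey l1 l2 using suminf_add[OF sA sB] suminf_mult[OF s1, of c] suminf_mult[OF s2, of "c\<^sup>2"]
    by simp
qed
lemma id_aux: fixes N :: real assumes "N \<noteq> 0" "q = lam * p + (1 - lam) * mu" "S = (N - 1) * mu"
  shows "q * ((S + 1) / N - p) + (1 - q) * (S / N - p) = (1 - lam / N) * (mu - p)"
proof -
  have "q * ((S + 1) / N - p) + (1 - q) * (S / N - p) = (S + q) / N - p"
    using assms(1) by (simp add: field_simps)
  also have "\<dots> = (S + q - N * p) / N" using assms(1) by (simp add: field_simps)
  also have "S + q - N * p = (N - lam) * (mu - p)" unfolding assms(2,3) by algebra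
  also have "(N - lam) * (mu - p) / N = (1 - lam / N) * (mu - p)" using assms(1) by (simp add: field_simps)
  finally show ?thesis .
qed

locale A8 =
  fixes M :: "'a measure" and r :: "nat \<Rightarrow> 'a \<Rightarrow> real" and p c :: real
  assumes ps: "prob_space M"
    and p0: "0 < p" and p1: "p < 1" and c0: "0 < c" and c1: "c < 1"
    and meas: "\<And>n. n \<ge> 1 \<Longrightarrow> r n \<in> borel_measurable M"
    and vals: "\<And>n \<omega>. n \<ge> 1 \<Longrightarrow> \<omega> \<in> space M \<Longrightarrow> r n \<omega> \<in> {0, 1}"
    and first: "measure M {\<omega> \<in> space M. r 1 \<omega> = 1} = p"
    and step: "\<And>n b. n \<ge> 2 \<Longrightarrow> (\<forall>i\<in>{1..n-1}. b i \<in> {0::real, 1}) \<Longrightarrow>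
           measure M {\<omega> \<in> space M. (\<forall>i\<in>{1..n-1}. r i \<omega> = b i) \<and> r n \<omega> = 1}
         = (c ^ (n - 1) * p + (1 - c ^ (n - 1)) * ((\<Sum>i=1..n-1. b i) / real (n - 1)))
           * measure M {\<omega> \<in> space M. \<forall>i\<in>{1..n-1}. r i \<omega> = b i}"
begin

definition Bs :: "nat \<Rightarrow> (nat \<Rightarrow> real) set" where
  "Bs n = Pi\<^sub>E {1..n} (\<lambda>_. {0,1})"
definition Cyl :: "nat \<Rightarrow> (nat \<Rightarrow> real) \<Rightarrow> 'a set" where
  "Cyl n b = {\<omega>\<in>space M. \<forall>i\<in>{1..n}. r i \<omega> = b i}"
definition E :: "nat \<Rightarrow> real" where
  "E n = (\<Sum>b\<in>Bs n. \<bar>(\<Sum>i=1..n. b i) / real n - p\<bar> * measure M (Cyl n b))"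

lemma finite_Bs: "finite (Bs n)"
  unfolding Bs_def by (intro finite_PiE) auto

lemma Cyl_sets: "Cyl n b \<in> sets M"
  unfolding Cyl_def
proof (rule sets.sets_Collect_finite_All)
  fix i assume i: "i \<in> {1..n}"
  have "r i \<in> borel_measurable M" using i meas by auto
  hence "r i -` {b i} \<inter> space M \<in> sets M" by (rule measurable_sets) simp
  thus "{\<omega> \<in> space M. r i \<omega> = b i} \<in> sets M"
    by (simp add: vimage_def Int_def conj_commute)
qed simp

lemma integral_rep:
  "integral\<^sup>L M (\<lambda>\<omega>. G (restrict (\<lambda>i. r i \<omega>) {1..n})) = (\<Sum>b\<in>Bs n. G b * measure M (Cyl n b))"
proof -
  have pw: "G (restrict (\<lambda>i. r i \<omega>) {1..n}) = (\<Sum>b\<in>Bs n. G b * indicator (Cyl n b) \<omega>)"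
    if w: "\<omega> \<in> space M" for \<omega>
  proof -
    let ?b0 = "restrict (\<lambda>i. r i \<omega>) {1..n}"
    have b0: "?b0 \<in> Bs n" using vals w unfolding Bs_def by auto
    have iff: "\<omega> \<in> Cyl n b \<longleftrightarrow> b = ?b0" if "b \<in> Bs n" for b
      using that w unfolding Cyl_def Bs_def by (auto simp: PiE_def extensional_def fun_eq_iff)
    have "(\<Sum>b\<in>Bs n. G b * indicator (Cyl n b) \<omega>) = (\<Sum>b\<in>Bs n. if b = ?b0 then G b else 0)"
      by (intro sum.cong refl) (simp add: iff indicator_def)
    also have "\<dots> = G ?b0" using b0 finite_Bs by (simp add: sum.delta')
    finally show ?thesis by simp
  qed
  have "integral\<^sup>L M (\<lambda>\<omega>. G (restrict (\<lambda>i. r i \<omega>) {1..n}))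
      = integral\<^sup>L M (\<lambda>\<omega>. \<Sum>b\<in>Bs n. G b * indicator (Cyl n b) \<omega>)"
    by (intro Bochner_Integration.integral_cong refl) (rule pw)
  also have "\<dots> = (\<Sum>b\<in>Bs n. integral\<^sup>L M (\<lambda>\<omega>. G b * indicator (Cyl n b) \<omega>))"
  proof (rule Bochner_Integration.integral_sum)
    fix b
    interpret prob_space M by (rule ps)
    have "integrable M (indicator (Cyl n b) :: 'a \<Rightarrow> real)"
      using Cyl_sets by (intro integrable_real_indicator) (auto simp: less_top[symmetric])
    thus "integrable M (\<lambda>\<omega>. G b * indicator (Cyl n b) \<omega>)" by (rule integrable_mult_right)
  qed
  also have "\<dots> = (\<Sum>b\<in>Bs n. G b * measure M (Cyl n b))"
    using Cyl_sets by (simp add: sets.Int_space_eq2)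
  finally show ?thesis .
qed

lemma E_integral: "E n = integral\<^sup>L M (\<lambda>\<omega>. \<bar>pbar r n \<omega> - p\<bar>)"
proof -
  have "integral\<^sup>L M (\<lambda>\<omega>. \<bar>pbar r n \<omega> - p\<bar>)
     = integral\<^sup>L M (\<lambda>\<omega>. (\<lambda>b. \<bar>(\<Sum>i=1..n. b i) / real n - p\<bar>) (restrict (\<lambda>i. r i \<omega>) {1..n}))"
  proof (intro Bochner_Integration.integral_cong refl)
    fix \<omega>
    have "(\<Sum>i=1..n. restrict (\<lambda>i. r i \<omega>) {1..n} i) = (\<Sum>i=1..n. r i \<omega>)" by (intro sum.cong) auto
    thus "\<bar>pbar r n \<omega> - p\<bar> = (\<lambda>b. \<bar>(\<Sum>i=1..n. b i) / real n - p\<bar>) (restrict (\<lambda>i. r i \<omega>) {1..n})"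
      unfolding pbar_def by simp
  qed
  also have "\<dots> = E n" unfolding E_def by (rule integral_rep)
  finally show ?thesis by simp
qed

lemma sumP: "(\<Sum>b\<in>Bs n. measure M (Cyl n b)) = 1"
proof -
  interpret prob_space M by (rule ps)
  have "integral\<^sup>L M (\<lambda>\<omega>. (\<lambda>b. 1::real) (restrict (\<lambda>i. r i \<omega>) {1..n})) = 1" by (simp add: prob_space.prob_space[OF ps])
  thus ?thesis using integral_rep[of "\<lambda>b. 1::real" n] by simp
qed

lemma Bs_sum: "b \<in> Bs n \<Longrightarrow> 0 \<le> (\<Sum>i=1..n. b i) \<and> (\<Sum>i=1..n. b i) \<le> real n"
proof -
  assume b: "b \<in> Bs n"
  have v: "i \<in> {1..n} \<Longrightarrow> b i \<in> {0,1}" for i using b unfolding Bs_def by auto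
  have "0 \<le> (\<Sum>i=1..n. b i)" by (intro sum_nonneg) (use v in force)
  moreover have "(\<Sum>i=1..n. b i) \<le> (\<Sum>i=1..n. 1)" by (intro sum_mono) (use v in force)
  ultimately show ?thesis by simp
qed

lemma E_le1: "E n \<le> 1"
proof -
  have "E n \<le> (\<Sum>b\<in>Bs n. 1 * measure M (Cyl n b))"
    unfolding E_def
  proof (intro sum_mono mult_right_mono)
    fix b assume b: "b \<in> Bs n"
    have "0 \<le> (\<Sum>i=1..n. b i) / real n \<and> (\<Sum>i=1..n. b i) / real n \<le> 1"
      using Bs_sum[OF b] by (cases "n = 0") (auto simp: divide_le_eq_1)
    thus "\<bar>(\<Sum>i=1..n. b i) / real n - p\<bar> \<le> 1"
      using p0 p1 by (auto simp: abs_le_iff)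
  qed simp
  thus ?thesis using sumP by simp
qed

lemma E_ge0: "0 \<le> E n"
  unfolding E_def by (intro sum_nonneg mult_nonneg_nonneg) auto

lemma E_decomp: "E (Suc m) = (\<Sum>g\<in>Bs m.
     \<bar>(\<Sum>i=1..m. g i) / real (Suc m) - p\<bar> * measure M (Cyl (Suc m) (g(Suc m := 0)))
   + \<bar>((\<Sum>i=1..m. g i) + 1) / real (Suc m) - p\<bar> * measure M (Cyl (Suc m) (g(Suc m := 1))))"
proof -
  let ?f = "\<lambda>b. \<bar>(\<Sum>i=1..Suc m. b i) / real (Suc m) - p\<bar> * measure M (Cyl (Suc m) b)"
  have ins: "{1..Suc m} = insert (Suc m) {1..m}" by auto
  have BsS: "Bs (Suc m) = (\<lambda>(y, g). g(Suc m := y)) ` ({0,1} \<times> Bs m)"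
    unfolding Bs_def ins by (rule PiE_insert_eq)
  have inj: "inj_on (\<lambda>(y, g). g(Suc m := y)) ({0::real,1} \<times> Bs m)"
    unfolding Bs_def using inj_combinator[of "Suc m" "{1..m}" "\<lambda>_. {0::real,1}"] by simp
  have sm: "(\<Sum>i=1..Suc m. (g(Suc m := y)) i) = (\<Sum>i=1..m. g i) + y" for g :: "nat \<Rightarrow> real" and y
  proof -
    have "(\<Sum>i=1..m. (g(Suc m := y)) i) = (\<Sum>i=1..m. g i)" by (intro sum.cong) auto
    thus ?thesis by (simp add: sum.cl_ivl_Suc)
  qed
  have "E (Suc m) = (\<Sum>(y,g)\<in>{0,1} \<times> Bs m. ?f (g(Suc m := y)))"
    unfolding E_def BsS sum.reindex[OF inj] by (simp add: case_prod_unfold)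
  also have "\<dots> = (\<Sum>y\<in>{0,1}. \<Sum>g\<in>Bs m. ?f (g(Suc m := y)))"
    by (rule sum.cartesian_product[symmetric])
  also have "\<dots> = (\<Sum>g\<in>Bs m. ?f (g(Suc m := 0))) + (\<Sum>g\<in>Bs m. ?f (g(Suc m := 1)))"
    by simp
  also have "\<dots> = (\<Sum>g\<in>Bs m. ?f (g(Suc m := 0)) + ?f (g(Suc m := 1)))"
    by (rule sum.distrib[symmetric])
  finally show ?thesis by (simp only: sm) simp
qed

lemma CylS: "Cyl (Suc m) h = {\<omega>\<in>space M. (\<forall>i\<in>{1..m}. r i \<omega> = h i) \<and> r (Suc m) \<omega> = h (Suc m)}"
proof -
  have "{1..Suc m} = insert (Suc m) {1..m}" by auto
  thus ?thesis unfolding Cyl_def by auto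
qed

lemma Cyl1_eq: "Cyl (Suc m) (g(Suc m := 1)) = {\<omega>\<in>space M. (\<forall>i\<in>{1..m}. r i \<omega> = g i) \<and> r (Suc m) \<omega> = 1}"
  unfolding CylS by auto

lemma Cyl0_eq: "Cyl (Suc m) (g(Suc m := 0)) = Cyl m g - Cyl (Suc m) (g(Suc m := 1))"
proof -
  have "r (Suc m) \<omega> \<in> {0,1}" if "\<omega> \<in> space M" for \<omega> using vals that by auto
  thus ?thesis unfolding CylS unfolding Cyl_def by auto
qed

lemma Cyl1_sub: "Cyl (Suc m) (g(Suc m := 1)) \<subseteq> Cyl m g"
  unfolding Cyl_def by auto

lemma E1: "E 1 = 2 * p * (1 - p)"
proof -
  interpret prob_space M by (rule ps)
  define g0 where "g0 = (\<lambda>_::nat. undefined :: real)"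
  let ?g = g0
  have B0: "Bs 0 = {g0}" unfolding Bs_def g0_def by simp
  have c1: "Cyl 1 (?g(1 := 1)) = {\<omega>\<in>space M. r 1 \<omega> = 1}"
    using Cyl1_eq[of 0 ?g] by simp
  have ev: "{\<omega>\<in>space M. r 1 \<omega> = 1} \<in> events" using Cyl_sets c1 by metis
  have c0: "Cyl 1 (?g(1 := 0)) = space M - {\<omega>\<in>space M. r 1 \<omega> = 1}"
    using Cyl0_eq[of 0 ?g] c1 by (simp add: Cyl_def)
  have "E 1 = \<bar>0 - p\<bar> * prob (Cyl 1 (?g(1 := 0))) + \<bar>1 - p\<bar> * prob (Cyl 1 (?g(1 := 1)))"
    using E_decomp[of 0] unfolding B0 by simp
  also have "\<dots> = p * (1 - p) + (1 - p) * p"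
    unfolding c0 c1 prob_compl[OF ev] first using p0 p1 by simp
  finally show ?thesis by simp
qed

lemma E_rec:
  assumes m: "m \<ge> 1"
  shows "(1 - c ^ m / real (Suc m)) * E m \<le> E (Suc m)"
proof -
  interpret prob_space M by (rule ps)
  define lam where "lam = c ^ m"
  have lam: "0 \<le> lam" "lam \<le> 1" unfolding lam_def using c0 c1 by (auto simp: power_le_one)
  have key: "(1 - lam / real (Suc m)) * (\<bar>(\<Sum>i=1..m. g i) / real m - p\<bar> * prob (Cyl m g))
     \<le> \<bar>(\<Sum>i=1..m. g i) / real (Suc m) - p\<bar> * prob (Cyl (Suc m) (g(Suc m := 0)))
       + \<bar>((\<Sum>i=1..m. g i) + 1) / real (Suc m) - p\<bar> * prob (Cyl (Suc m) (g(Suc m := 1)))"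
    if g: "g \<in> Bs m" for g
  proof -
    define S where "S = (\<Sum>i=1..m. g i)"
    define mu where "mu = S / real m"
    define Q where "Q = prob (Cyl m g)"
    define q where "q = lam * p + (1 - lam) * mu"
    have mS: "S = real m * mu" unfolding mu_def using m by simp
    have mu: "0 \<le> mu" "mu \<le> 1" unfolding mu_def S_def using Bs_sum[OF g] m by (auto simp: divide_le_eq_1)
    have q: "0 \<le> q" "q \<le> 1" unfolding q_def using lam mu p0 p1
      by (auto intro!: convex_bound_le add_nonneg_nonneg mult_nonneg_nonneg)
    have Q: "0 \<le> Q" unfolding Q_def by simp
    have gv: "\<forall>i\<in>{1..Suc m - 1}. g i \<in> {0::real, 1}" using g unfolding Bs_def by auto
    have P1: "prob (Cyl (Suc m) (g(Suc m := 1))) = q * Q"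
      unfolding Cyl1_eq q_def Q_def mu_def S_def lam_def
      using step[of "Suc m" g] gv m by (simp add: Cyl_def)
    have P0: "prob (Cyl (Suc m) (g(Suc m := 0))) = (1 - q) * Q"
    proof -
      have "prob (Cyl m g - Cyl (Suc m) (g(Suc m:=1))) = prob (Cyl m g) - prob (Cyl (Suc m) (g(Suc m:=1)))"
        by (rule finite_measure_Diff[OF Cyl_sets Cyl_sets Cyl1_sub])
      thus ?thesis unfolding Cyl0_eq P1 Q_def by (simp add: algebra_simps)
    qed
    have id: "q * ((S + 1) / real (Suc m) - p) + (1 - q) * (S / real (Suc m) - p)
        = (1 - lam / real (Suc m)) * (mu - p)"
      by (rule id_aux) (auto simp: q_def mS)
    have "(1 - lam / real (Suc m)) * \<bar>mu - p\<bar> = \<bar>(1 - lam / real (Suc m)) * (mu - p)\<bar>"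
      using lam by (simp add: abs_mult divide_le_eq)
    also have "\<dots> \<le> \<bar>q * ((S + 1) / real (Suc m) - p)\<bar> + \<bar>(1 - q) * (S / real (Suc m) - p)\<bar>"
      unfolding id[symmetric] by (rule abs_triangle_ineq)
    also have "\<dots> = (1 - q) * \<bar>S / real (Suc m) - p\<bar> + q * \<bar>(S + 1) / real (Suc m) - p\<bar>"
      using q by (simp add: abs_mult)
    finally have "(1 - lam / real (Suc m)) * \<bar>mu - p\<bar> * Q
       \<le> ((1 - q) * \<bar>S / real (Suc m) - p\<bar> + q * \<bar>(S + 1) / real (Suc m) - p\<bar>) * Q"
      using Q by (rule mult_right_mono)
    thus ?thesis unfolding P0 P1 S_def[symmetric] mu_def[symmetric] Q_def[symmetric]
      by (simp add: algebra_simps)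
  qed
  have "(1 - lam / real (Suc m)) * E m
      = (\<Sum>g\<in>Bs m. (1 - lam / real (Suc m)) * (\<bar>(\<Sum>i=1..m. g i) / real m - p\<bar> * prob (Cyl m g)))"
    unfolding E_def by (rule sum_distrib_left)
  also have "\<dots> \<le> E (Suc m)" unfolding E_decomp by (rule sum_mono) (rule key)
  finally show ?thesis unfolding lam_def .
qed

end

theorem propositionA8:
  fixes M :: "'a measure" and r :: "nat \<Rightarrow> 'a \<Rightarrow> real" and p c :: real
  assumes "prob_space M"
    and "0 < p" "p < 1" "0 < c" "c < 1"
    and "\<And>n. n \<ge> 1 \<Longrightarrow> r n \<in> borel_measurable M"
    and "\<And>n \<omega>. n \<ge> 1 \<Longrightarrow> \<omega> \<in> space M \<Longrightarrow> r n \<omega> \<in> {0, 1}"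
    and "measure M {\<omega> \<in> space M. r 1 \<omega> = 1} = p"
    and "\<And>n b. n \<ge> 2 \<Longrightarrow> (\<forall>i\<in>{1..n-1}. b i \<in> {0::real, 1}) \<Longrightarrow>
           measure M {\<omega> \<in> space M. (\<forall>i\<in>{1..n-1}. r i \<omega> = b i) \<and> r n \<omega> = 1}
         = (c ^ (n - 1) * p + (1 - c ^ (n - 1)) * ((\<Sum>i=1..n-1. b i) / real (n - 1)))
           * measure M {\<omega> \<in> space M. \<forall>i\<in>{1..n-1}. r i \<omega> = b i}"
  shows "convergent (\<lambda>n. integral\<^sup>L M (\<lambda>\<omega>. \<bar>pbar r n \<omega> - p\<bar>))
       \<and> lim (\<lambda>n. integral\<^sup>L M (\<lambda>\<omega>. \<bar>pbar r n \<omega> - p\<bar>))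
           \<ge> 2 * p * (1 - p) * exp (- c * lerch c 1 2 - c\<^sup>2 * lerch (c\<^sup>2) 2 2)"
proof -
  interpret A8 M r p c by (rule A8.intro[OF assms])
  define y where "y k = c ^ Suc k / real (Suc (Suc k))" for k
  define T where "T = c * lerch c 1 2 + c\<^sup>2 * lerch (c\<^sup>2) 2 2"
  have sy: "summable (\<lambda>k. y k + (y k)\<^sup>2)" and Ty: "(\<Sum>k. y k + (y k)\<^sup>2) = T"
    using series_aux[OF c0 c1] unfolding y_def T_def by auto
  have y0: "0 \<le> y k" for k unfolding y_def using c0 by simp
  have y1: "y k \<le> 1/2" for k
  proof -
    have "c ^ Suc k \<le> 1" using c0 c1 power_le_one[of c "Suc k"] by (simp del: power_Suc)
    moreover have "real (Suc (Suc k)) \<ge> 2" by simp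
    ultimately show ?thesis unfolding y_def by (simp add: divide_le_eq)
  qed
  define F where "F k = E (Suc k)" for k
  define L where "L k = (\<Prod>j<k. 1 - y j)" for k
  have Lpos: "0 < L k" for k unfolding L_def proof (intro prod_pos) fix j show "0 < 1 - y j" using y1[of j] by simp qed
  have LS: "L (Suc k) = L k * (1 - y k)" for k unfolding L_def by simp
  have Lge: "exp (- T) \<le> L k" for k
  proof -
    have "(\<Sum>j<k. y j + (y j)\<^sup>2) \<le> T"
      unfolding Ty[symmetric] by (rule sum_le_suminf[OF sy]) (auto intro: add_nonneg_nonneg y0)
    hence "exp (- T) \<le> exp (- (\<Sum>j<k. y j + (y j)\<^sup>2))" by simp
    also have "\<dots> = (\<Prod>j<k. exp (- y j - (y j)\<^sup>2))"
      by (simp add: exp_sum[symmetric] sum_negf[symmetric] algebra_simps)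
    also have "\<dots> \<le> L k" unfolding L_def
      by (intro prod_mono) (use exp_bound_aux y0 y1 in auto)
    finally show ?thesis .
  qed
  have Frec: "(1 - y k) * F k \<le> F (Suc k)" for k
    using E_rec[of "Suc k"] unfolding F_def y_def by simp
  define a where "a k = F k / L k" for k
  have ainc: "incseq a"
  proof (rule incseq_SucI)
    fix k
    have yk: "0 < 1 - y k" using y1[of k] by simp
    have "a k = ((1 - y k) * F k) / (L k * (1 - y k))" unfolding a_def using yk by simp
    also have "\<dots> \<le> F (Suc k) / (L k * (1 - y k))"
      using Frec[of k] Lpos[of k] yk by (intro divide_right_mono) auto
    finally show "a k \<le> a (Suc k)" unfolding a_def LS .
  qed
  have abnd: "\<forall>k. a k \<le> exp T"
  proof
    fix k
    have "F k \<le> 1" unfolding F_def by (rule E_le1)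
    also have "1 = exp T * exp (- T)" by (simp add: exp_minus)
    also have "\<dots> \<le> exp T * L k" using Lge[of k] by simp
    finally show "a k \<le> exp T" unfolding a_def using Lpos[of k] by (simp add: pos_divide_le_eq)
  qed
  obtain A where aA: "a \<longlonglongrightarrow> A" and aleA: "\<forall>k. a k \<le> A"
    using incseq_convergent[OF ainc abnd] by blast
  have a0: "a 0 = 2 * p * (1 - p)" unfolding a_def F_def L_def using E1 by simp
  have Ldec: "decseq L"
    by (rule decseq_SucI) (use LS Lpos y0 in \<open>auto simp: mult_le_cancel_left1\<close>)
  obtain Ll where LL: "L \<longlonglongrightarrow> Ll" and "\<forall>k. Ll \<le> L k"
    using decseq_convergent[OF Ldec, of 0] Lpos less_imp_le by blast
  have Llge: "exp (- T) \<le> Ll" using LL by (rule LIMSEQ_le_const) (use Lge in auto)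
  have "(\<lambda>k. a k * L k) \<longlonglongrightarrow> A * Ll" using aA LL by (rule tendsto_mult)
  moreover have "a k * L k = E (Suc k)" for k unfolding a_def F_def using Lpos[of k] by simp
  ultimately have "(\<lambda>k. E (Suc k)) \<longlonglongrightarrow> A * Ll" by simp
  hence EL: "E \<longlonglongrightarrow> A * Ll" by (rule LIMSEQ_imp_Suc)
  have Eeq: "(\<lambda>n. integral\<^sup>L M (\<lambda>\<omega>. \<bar>pbar r n \<omega> - p\<bar>)) = E" by (rule ext) (simp add: E_integral)
  have pp: "0 \<le> 2 * p * (1 - p)" using p0 p1 by simp
  have "2 * p * (1 - p) * exp (- T) \<le> A * Ll"
    using aleA[rule_format, of 0] a0 Llge pp by (intro mult_mono) auto
  moreover have "- c * lerch c 1 2 - c\<^sup>2 * lerch (c\<^sup>2) 2 2 = - T" unfolding T_def by simp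
  ultimately show ?thesis unfolding Eeq using EL by (auto simp: convergent_def limI)
qed

end
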